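(* Every closed admissible conic class contains a minimal (with respect to inclusion) closed admissible conic class.
   Context: Standing setting: $(X,\|\cdot\|)$ is a separable infinite-dimensional Banach space and $d$ is a translation-invariant stable pseudometric on $X$ such that $\mathrm{Id}\colon(X,\|\cdot\|)\to(X,d)$ is a coarse equivalence, with $\omega_{\mathrm{Id}}(t)=\sup\{d(x,y):\|x-y\|\le t\}$. $\Delta$ is a countable $\|\cdot\|$-dense $\mathbb Q$-linear subspace; $\bar x(\lambda,y)=d(\lambda x,y)$; $\mathcal T$ is the pointwise closure of $\{\bar x:x\in\Delta\}$ in $\mathbb R^{\mathbb Q\times\Delta}$; defining sequences $(x_n)\subseteq\Delta$ satisfy $\bar x_n\to\sigma$. Dilation $\alpha\cdot\sigma=\lim_n\overline{\alpha x_n}$ ($\alpha\in\mathbb Q$); convolution $\sigma*\tau=\lim_n\lim_m\overline{x_n+y_m}$. Symmetric types: $\sigma=(-1)\cdot\sigma$; $\mathcal S$ their set. $\gamma=\inf_{t>0}\omega_{\mathrm{Id}}(t)$; $\sigma$ admissible if $\sigma(1,0)>\gamma$. A conic class is a nonempty $\mathcal C\subseteq\mathcal S$, $\mathcal C\ne\{\bar0\}$, closed under dilation by all $\lambda\in\mathbb Q$ and under convolution; admissible if it contains an admissible type; closed means closed in $\mathcal T$. *)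

theory Defs
  imports "HOL-Analysis.Analysis"
begin

definition infinite_dimensional :: "'a::real_normed_vector itself \<Rightarrow> bool" where
  "infinite_dimensional _ \<longleftrightarrow> \<not> (\<exists>B::'a set. finite B \<and> span B = UNIV)"

definition separable_nv :: "'a::real_normed_vector itself \<Rightarrow> bool" where
  "separable_nv _ \<longleftrightarrow> (\<exists>S::'a set. countable S \<and> closure S = UNIV)"

definition pseudometric :: "('a \<Rightarrow> 'a \<Rightarrow> real) \<Rightarrow> bool" where
  "pseudometric d \<longleftrightarrow> (\<forall>x. d x x = 0) \<and> (\<forall>x y. d x y = d y x)
     \<and> (\<forall>x y z. d x z \<le> d x y + d y z)"

definition translation_invariant :: "('a::ab_group_add \<Rightarrow> 'a \<Rightarrow> real) \<Rightarrow> bool" where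
  "translation_invariant d \<longleftrightarrow> (\<forall>x y z. d (x + z) (y + z) = d x y)"

definition stable_pm :: "('a \<Rightarrow> 'a \<Rightarrow> real) \<Rightarrow> bool" where
  "stable_pm d \<longleftrightarrow> (\<forall>xs ys :: nat \<Rightarrow> 'a. \<forall>a b :: nat \<Rightarrow> real. \<forall>L1 L2.
     (\<exists>z B. \<forall>n. d (xs n) z \<le> B \<and> d (ys n) z \<le> B)
     \<longrightarrow> (\<forall>n. (\<lambda>m. d (xs n) (ys m)) \<longlonglongrightarrow> a n) \<longrightarrow> a \<longlonglongrightarrow> L1
     \<longrightarrow> (\<forall>m. (\<lambda>n. d (xs n) (ys m)) \<longlonglongrightarrow> b m) \<longrightarrow> b \<longlonglongrightarrow> L2
     \<longrightarrow> L1 = L2)"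

definition coarse_equiv_id :: "('a::real_normed_vector \<Rightarrow> 'a \<Rightarrow> real) \<Rightarrow> bool" where
  "coarse_equiv_id d \<longleftrightarrow>
     (\<forall>t. \<exists>B. \<forall>x y. norm (x - y) \<le> t \<longrightarrow> d x y \<le> B)
   \<and> (\<forall>t. \<exists>B. \<forall>x y. d x y \<le> t \<longrightarrow> norm (x - y) \<le> B)"

definition omega_id :: "('a::real_normed_vector \<Rightarrow> 'a \<Rightarrow> real) \<Rightarrow> real \<Rightarrow> real" where
  "omega_id d t = Sup {d x y | x y. norm (x - y) \<le> t}"

definition gamma :: "('a::real_normed_vector \<Rightarrow> 'a \<Rightarrow> real) \<Rightarrow> real" where
  "gamma d = Inf (omega_id d ` {0<..})"

definition rat_dense_subspace :: "'a::real_normed_vector set \<Rightarrow> bool" where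
  "rat_dense_subspace \<Delta> \<longleftrightarrow> countable \<Delta> \<and> closure \<Delta> = UNIV \<and> 0 \<in> \<Delta>
     \<and> (\<forall>x\<in>\<Delta>. \<forall>y\<in>\<Delta>. x + y \<in> \<Delta>)
     \<and> (\<forall>q::rat. \<forall>x\<in>\<Delta>. of_rat q *\<^sub>R x \<in> \<Delta>)"

text \<open>Elements of R^(Q x Delta) are represented as functions rat \<times> 'a \<Rightarrow> real vanishing
 outside Q x Delta; the product (pointwise) topology is the library's topology on functions.\<close>
definition tbar :: "('a::real_normed_vector \<Rightarrow> 'a \<Rightarrow> real) \<Rightarrow> 'a set \<Rightarrow> 'a \<Rightarrow> (rat \<times> 'a \<Rightarrow> real)" where
  "tbar d \<Delta> x = (\<lambda>(q, y). if y \<in> \<Delta> then d (of_rat q *\<^sub>R x) y else 0)"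

definition types :: "('a::real_normed_vector \<Rightarrow> 'a \<Rightarrow> real) \<Rightarrow> 'a set \<Rightarrow> (rat \<times> 'a \<Rightarrow> real) set" where
  "types d \<Delta> = closure (tbar d \<Delta> ` \<Delta>)"

definition defining_seq :: "('a::real_normed_vector \<Rightarrow> 'a \<Rightarrow> real) \<Rightarrow> 'a set \<Rightarrow> (nat \<Rightarrow> 'a) \<Rightarrow> (rat \<times> 'a \<Rightarrow> real) \<Rightarrow> bool" where
  "defining_seq d \<Delta> xs \<sigma> \<longleftrightarrow> (\<forall>n. xs n \<in> \<Delta>) \<and> (\<lambda>n. tbar d \<Delta> (xs n)) \<longlonglongrightarrow> \<sigma>"

definition dil :: "('a::real_normed_vector \<Rightarrow> 'a \<Rightarrow> real) \<Rightarrow> 'a set \<Rightarrow> rat \<Rightarrow> (rat \<times> 'a \<Rightarrow> real) \<Rightarrow> (rat \<times> 'a \<Rightarrow> real)" where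
  "dil d \<Delta> \<alpha> \<sigma> = (THE \<tau>. \<forall>xs. defining_seq d \<Delta> xs \<sigma> \<longrightarrow>
      (\<lambda>n. tbar d \<Delta> (of_rat \<alpha> *\<^sub>R xs n)) \<longlonglongrightarrow> \<tau>)"

definition conv :: "('a::real_normed_vector \<Rightarrow> 'a \<Rightarrow> real) \<Rightarrow> 'a set \<Rightarrow> (rat \<times> 'a \<Rightarrow> real) \<Rightarrow> (rat \<times> 'a \<Rightarrow> real) \<Rightarrow> (rat \<times> 'a \<Rightarrow> real)" where
  "conv d \<Delta> \<sigma> \<tau> = (THE \<rho>. \<forall>xs ys. defining_seq d \<Delta> xs \<sigma> \<longrightarrow> defining_seq d \<Delta> ys \<tau> \<longrightarrow>
      (\<exists>\<rho>n. (\<forall>n. (\<lambda>m. tbar d \<Delta> (xs n + ys m)) \<longlonglongrightarrow> \<rho>n n) \<and> \<rho>n \<longlonglongrightarrow> \<rho>))"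

definition sym_types :: "('a::real_normed_vector \<Rightarrow> 'a \<Rightarrow> real) \<Rightarrow> 'a set \<Rightarrow> (rat \<times> 'a \<Rightarrow> real) set" where
  "sym_types d \<Delta> = {\<sigma> \<in> types d \<Delta>. \<sigma> = dil d \<Delta> (-1) \<sigma>}"

definition admissible_type :: "('a::real_normed_vector \<Rightarrow> 'a \<Rightarrow> real) \<Rightarrow> (rat \<times> 'a \<Rightarrow> real) \<Rightarrow> bool" where
  "admissible_type d \<sigma> \<longleftrightarrow> \<sigma> (1, 0) > gamma d"

definition conic_class :: "('a::real_normed_vector \<Rightarrow> 'a \<Rightarrow> real) \<Rightarrow> 'a set \<Rightarrow> (rat \<times> 'a \<Rightarrow> real) set \<Rightarrow> bool" where
  "conic_class d \<Delta> C \<longleftrightarrow> C \<noteq> {} \<and> C \<subseteq> sym_types d \<Delta> \<and> C \<noteq> {tbar d \<Delta> 0}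
     \<and> (\<forall>q::rat. \<forall>\<sigma>\<in>C. dil d \<Delta> q \<sigma> \<in> C)
     \<and> (\<forall>\<sigma>\<in>C. \<forall>\<tau>\<in>C. conv d \<Delta> \<sigma> \<tau> \<in> C)"

definition admissible_class :: "('a::real_normed_vector \<Rightarrow> 'a \<Rightarrow> real) \<Rightarrow> (rat \<times> 'a \<Rightarrow> real) set \<Rightarrow> bool" where
  "admissible_class d C \<longleftrightarrow> (\<exists>\<sigma>\<in>C. admissible_type d \<sigma>)"

definition closed_adm_conic :: "('a::real_normed_vector \<Rightarrow> 'a \<Rightarrow> real) \<Rightarrow> 'a set \<Rightarrow> (rat \<times> 'a \<Rightarrow> real) set \<Rightarrow> bool" where
  "closed_adm_conic d \<Delta> C \<longleftrightarrow> conic_class d \<Delta> C \<and> admissible_class d C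
     \<and> closedin (top_of_set (types d \<Delta>)) C"

end

theory Submission imports Defs begin

lemma tendsto_fun_iff:
  fixes f :: "'b \<Rightarrow> 'i \<Rightarrow> real"
  shows "(f \<longlongrightarrow> l) F \<longleftrightarrow> (\<forall>i. ((\<lambda>c. f c i) \<longlongrightarrow> l i) F)"
  using limitin_componentwise[of "\<lambda>_. euclidean" UNIV f l F]
  by (simp add: euclidean_product_topology flip: limitin_canonical_iff)

lemma cont_coord: "continuous_on UNIV (\<lambda>g::'i \<Rightarrow> real. g i)"
  by simp

lemma closed_coord_le: "closed {g::'i \<Rightarrow> real. g i \<le> c}"
  by (rule closed_Collect_le) (auto intro: continuous_intros)
lemma closed_coord_ge: "closed {g::'i \<Rightarrow> real. c \<le> g i}"
  by (rule closed_Collect_le) (auto intro: continuous_intros)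
lemma closed_coord_le2: "closed {g::'i \<Rightarrow> real. g i \<le> 2 * g j}"
  by (rule closed_Collect_le) (auto intro: continuous_intros)
lemma closed_coord_eq: "closed {g::'i \<Rightarrow> real. g i = c}"
proof -
  have "{g::'i \<Rightarrow> real. g i = c} = {g. g i \<le> c} \<inter> {g. c \<le> g i}" by auto
  thus ?thesis using closed_coord_le closed_coord_ge by (metis closed_Int)
qed
lemma open_coord_less: "open {g::'i \<Rightarrow> real. g i < c}"
  by (rule open_Collect_less) (auto intro: continuous_intros)
lemma open_coord_gt: "open {g::'i \<Rightarrow> real. c < g i}"
  by (rule open_Collect_less) (auto intro: continuous_intros)

lemma closure_trans:
  assumes "open U" "closed S" "A \<inter> U \<subseteq> S" "x \<in> closure A" "x \<in> U"
  shows "x \<in> S"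
proof -
  have "x \<in> closure (U \<inter> A)" using open_Int_closure_subset[OF assms(1)] assms(4,5) by blast
  also have "\<dots> \<subseteq> S" using assms(2,3) by (simp add: Int_commute closure_minimal)
  finally show ?thesis .
qed


locale Sett =
  fixes d :: "'a::real_normed_vector \<Rightarrow> 'a \<Rightarrow> real" and \<Delta> :: "'a set"
  assumes pm: "pseudometric d" and ti: "translation_invariant d"
    and ce: "coarse_equiv_id d" and rd: "rat_dense_subspace \<Delta>"
begin

lemma d00[simp]: "d x x = 0" using pm by (simp add: pseudometric_def)
lemma dsym: "d x y = d y x" using pm by (simp add: pseudometric_def)
lemma dtri: "d x z \<le> d x y + d y z" using pm by (simp add: pseudometric_def)
lemma dnn: "0 \<le> d x y" using dtri[of x x y] dsym[of y x] d00[of x] by linarith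
lemma dti: "d (x + z) (y + z) = d x y" using ti by (simp add: translation_invariant_def)

lemma zD: "0 \<in> \<Delta>" using rd by (simp add: rat_dense_subspace_def)

lemma ce1: "\<exists>B. \<forall>x y. norm (x - y) \<le> t \<longrightarrow> d x y \<le> B"
  using ce by (simp add: coarse_equiv_id_def)
lemma ce2: "\<exists>B. \<forall>x y. d x y \<le> t \<longrightarrow> norm (x - y) \<le> B"
  using ce by (simp add: coarse_equiv_id_def)

lemma omega_bdd: "bdd_above {d x y | x y. norm (x - y) \<le> t}"
proof -
  obtain B where "\<forall>x y. norm (x - y) \<le> t \<longrightarrow> d x y \<le> B" using ce1 by blast
  thus ?thesis unfolding bdd_above_def by blast
qed

lemma omega_ub: "norm (x - y) \<le> t \<Longrightarrow> d x y \<le> omega_id d t"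
  unfolding omega_id_def by (rule cSup_upper[OF _ omega_bdd]) blast

lemma omega_nn: "0 \<le> t \<Longrightarrow> 0 \<le> omega_id d t"
  using omega_ub[of 0 0 t] by simp

lemma gamma_nn: "0 \<le> gamma d"
  unfolding gamma_def by (rule cInf_greatest) (auto intro: omega_nn)

lemma gamma_lessD: "gamma d < s \<Longrightarrow> \<exists>t>0. omega_id d t < s"
  unfolding gamma_def using cInf_lessD[of "omega_id d ` {0<..}" s] by auto

lemma tbar_in: "y \<in> \<Delta> \<Longrightarrow> tbar d \<Delta> x (q, y) = d (of_rat q *\<^sub>R x) y"
  by (simp add: tbar_def)
lemma tbar_out: "y \<notin> \<Delta> \<Longrightarrow> tbar d \<Delta> x (q, y) = 0"
  by (simp add: tbar_def)

lemma types_closed: "closed (types d \<Delta>)" by (simp add: types_def)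

lemma types_vanish: assumes "\<sigma> \<in> types d \<Delta>" "y \<notin> \<Delta>" shows "\<sigma> (q, y) = 0"
proof -
  have "\<sigma> \<in> {g. g (q,y) = 0}"
    by (rule closure_trans[of UNIV _ "tbar d \<Delta> ` \<Delta>"]) (use assms in \<open>auto simp: tbar_out closed_coord_eq types_def\<close>)
  thus ?thesis by simp
qed


lemma defseq_exists:
  assumes \<sigma>: "\<sigma> \<in> types d \<Delta>"
  shows "\<exists>xs. defining_seq d \<Delta> xs \<sigma>"
proof -
  define P where "P = (UNIV :: rat set) \<times> \<Delta>"
  have cP: "countable P" using rd unfolding P_def rat_dense_subspace_def by auto
  have nP: "P \<noteq> {}" using zD unfolding P_def by auto
  define e where "e = from_nat_into P"
  have eP: "e k \<in> P" for k unfolding e_def by (rule from_nat_into[OF nP])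
  define U where "U n = {g. \<forall>k\<in>{..n}. g (e k) \<in> ball (\<sigma> (e k)) (1 / (real n + 1))}" for n
  have oU: "open (U n)" for n unfolding U_def
    using product_topology_basis'[of "{..n}" "\<lambda>k. ball (\<sigma> (e k)) (1 / (real n + 1))" e] by simp
  have sU: "\<sigma> \<in> U n" for n unfolding U_def by auto
  have "\<exists>x\<in>\<Delta>. tbar d \<Delta> x \<in> U n" for n
  proof -
    have "U n \<inter> closure (tbar d \<Delta> ` \<Delta>) \<noteq> {}" using sU \<sigma> by (auto simp: types_def)
    hence "U n \<inter> tbar d \<Delta> ` \<Delta> \<noteq> {}" using open_Int_closure_eq_empty[OF oU] by blast
    thus ?thesis by blast
  qed
  then obtain xs where xs: "\<And>n. xs n \<in> \<Delta>" "\<And>n. tbar d \<Delta> (xs n) \<in> U n" by metis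
  have "(\<lambda>n. tbar d \<Delta> (xs n) p) \<longlonglongrightarrow> \<sigma> p" for p
  proof (cases "p \<in> P")
    case True
    then obtain k where k: "e k = p" unfolding e_def using from_nat_into_surj[OF cP] by blast
    show ?thesis
    proof (rule LIMSEQ_I)
      fix r :: real assume "0 < r"
      then obtain m where m: "inverse (real (Suc m)) < r" using reals_Archimedean by blast
      show "\<exists>no. \<forall>n\<ge>no. norm (tbar d \<Delta> (xs n) p - \<sigma> p) < r"
      proof (intro exI allI impI)
        fix n assume n: "max k m \<le> n"
        have "tbar d \<Delta> (xs n) p \<in> ball (\<sigma> p) (1 / (real n + 1))"
          using xs(2)[of n] n k unfolding U_def by auto
        hence "norm (tbar d \<Delta> (xs n) p - \<sigma> p) < 1 / (real n + 1)"
          by (simp add: dist_norm norm_minus_commute)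
        also have "\<dots> \<le> inverse (real (Suc m))" using n
          by (simp add: divide_simps)
        finally show "norm (tbar d \<Delta> (xs n) p - \<sigma> p) < r" using m by linarith
      qed
    qed
  next
    case False
    then obtain q y where p: "p = (q, y)" "y \<notin> \<Delta>" unfolding P_def by (cases p) auto
    show ?thesis using p types_vanish[OF \<sigma> p(2)] by (simp add: tbar_out)
  qed
  hence "(\<lambda>n. tbar d \<Delta> (xs n)) \<longlonglongrightarrow> \<sigma>" by (simp add: tendsto_fun_iff)
  thus ?thesis using xs(1) unfolding defining_seq_def by blast
qed

lemma dil_eq:
  assumes \<sigma>: "\<sigma> \<in> types d \<Delta>"
  shows "dil d \<Delta> q \<sigma> = (\<lambda>(l, y). \<sigma> (l * q, y))"
proof -
  have key: "(\<lambda>n. tbar d \<Delta> (of_rat q *\<^sub>R xs n)) \<longlonglongrightarrow> (\<lambda>(l, y). \<sigma> (l * q, y))"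
    if "defining_seq d \<Delta> xs \<sigma>" for xs
  proof -
    have c: "(\<lambda>n. tbar d \<Delta> (xs n)) \<longlonglongrightarrow> \<sigma>" using that by (simp add: defining_seq_def)
    have eq: "tbar d \<Delta> (of_rat q *\<^sub>R x) = (\<lambda>(l, y). tbar d \<Delta> x (l * q, y))" for x
      by (rule ext) (auto simp: tbar_def of_rat_mult mult.commute split: prod.split)
    show ?thesis unfolding eq tendsto_fun_iff
    proof
      fix i :: "rat \<times> 'a"
      obtain l y where i: "i = (l, y)" by (cases i)
      show "((\<lambda>c. (case i of (l, y) \<Rightarrow> tbar d \<Delta> (xs c) (l * q, y))) \<longlonglongrightarrow> (case i of (l, y) \<Rightarrow> \<sigma> (l * q, y)))"
        using c unfolding tendsto_fun_iff i by simp
    qed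
  qed
  obtain xs0 where xs0: "defining_seq d \<Delta> xs0 \<sigma>" using defseq_exists[OF \<sigma>] by blast
  show ?thesis unfolding dil_def
  proof (rule the_equality)
    show "\<forall>xs. defining_seq d \<Delta> xs \<sigma> \<longrightarrow> (\<lambda>n. tbar d \<Delta> (of_rat q *\<^sub>R xs n)) \<longlonglongrightarrow> (\<lambda>(l, y). \<sigma> (l * q, y))"
      using key by blast
    fix \<tau> assume "\<forall>xs. defining_seq d \<Delta> xs \<sigma> \<longrightarrow> (\<lambda>n. tbar d \<Delta> (of_rat q *\<^sub>R xs n)) \<longlonglongrightarrow> \<tau>"
    hence "(\<lambda>n. tbar d \<Delta> (of_rat q *\<^sub>R xs0 n)) \<longlonglongrightarrow> \<tau>" using xs0 by blast
    thus "\<tau> = (\<lambda>(l, y). \<sigma> (l * q, y))" using key[OF xs0] unfolding tendsto_fun_iff by (metis LIMSEQ_unique ext)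
  qed
qed


lemma types_double:
  assumes \<sigma>: "\<sigma> \<in> types d \<Delta>"
  shows "\<sigma> (2 * q, 0) \<le> 2 * \<sigma> (q, 0)"
proof -
  have "\<sigma> \<in> {g. g (2 * q, 0) \<le> 2 * g (q, 0)}"
  proof (rule closure_trans[of UNIV _ "tbar d \<Delta> ` \<Delta>"])
    show "tbar d \<Delta> ` \<Delta> \<inter> UNIV \<subseteq> {g. g (2 * q, 0) \<le> 2 * g (q, 0)}"
    proof clarsimp
      fix x assume "x \<in> \<Delta>"
      define u where "u = real_of_rat q *\<^sub>R x"
      have e: "real_of_rat (2 * q) *\<^sub>R x = u + u" unfolding u_def
        by (simp add: of_rat_mult scaleR_left_distrib[symmetric])
      have "d (u + u) 0 \<le> d (u + u) (0 + u) + d u 0" using dtri[of "u+u" 0 u] by simp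
      also have "d (u + u) (0 + u) = d u 0" by (rule dti)
      finally show "tbar d \<Delta> x (2 * q, 0) \<le> 2 * tbar d \<Delta> x (q, 0)"
        using zD by (simp add: tbar_in e u_def)
    qed
  qed (use \<sigma> closed_coord_le2 in \<open>auto simp: types_def\<close>)
  thus ?thesis by simp
qed

lemma types_upper:
  assumes \<sigma>: "\<sigma> \<in> types d \<Delta>" and g: "gamma d < \<sigma> (1, 0)"
  shows "\<exists>t>0. \<exists>B. \<forall>q. 0 < q \<longrightarrow> B < real_of_rat q * t \<longrightarrow> a \<le> \<sigma> (q, 0)"
proof -
  obtain t where t: "t > 0" "omega_id d t < \<sigma> (1, 0)" using gamma_lessD[OF g] by blast
  obtain B where B: "\<And>u v. d u v \<le> a \<Longrightarrow> norm (u - v) \<le> B" using ce2[of a] by blast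
  have "a \<le> \<sigma> (q, 0)" if q: "0 < q" "B < real_of_rat q * t" for q
  proof -
    have "\<sigma> \<in> {g. a \<le> g (q, 0)}"
    proof (rule closure_trans[of "{g. omega_id d t < g (1, 0)}" _ "tbar d \<Delta> ` \<Delta>"])
      show "tbar d \<Delta> ` \<Delta> \<inter> {g. omega_id d t < g (1, 0)} \<subseteq> {g. a \<le> g (q, 0)}"
      proof clarsimp
        fix x assume x: "x \<in> \<Delta>" "omega_id d t < tbar d \<Delta> x (1, 0)"
        hence "omega_id d t < d x 0" using zD by (simp add: tbar_in)
        hence nx: "t < norm x" using omega_ub[of x 0 t] by force
        have qp: "0 < real_of_rat q" using q(1) by simp
        have "real_of_rat q * t < real_of_rat q * norm x" using nx qp by simp
        hence "B < norm (real_of_rat q *\<^sub>R x - 0)" using q(2) qp by (simp add: less_trans)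
        hence "\<not> d (real_of_rat q *\<^sub>R x) 0 \<le> a" using B by force
        thus "a \<le> tbar d \<Delta> x (q, 0)" using zD by (simp add: tbar_in)
      qed
    qed (use \<sigma> t closed_coord_ge open_coord_gt in \<open>auto simp: types_def\<close>)
    thus ?thesis by simp
  qed
  thus ?thesis using t(1) by blast
qed

lemma types_lower:
  assumes \<sigma>: "\<sigma> \<in> types d \<Delta>"
  shows "\<exists>B0\<ge>0. \<forall>q. \<bar>real_of_rat q\<bar> * B0 \<le> t0 \<longrightarrow> \<sigma> (q, 0) \<le> omega_id d t0"
proof -
  obtain B where B: "\<And>u v. d u v \<le> \<sigma> (1, 0) + 1 \<Longrightarrow> norm (u - v) \<le> B" using ce2 by blast
  define B0 where "B0 = max B 0"
  have "\<sigma> (q, 0) \<le> omega_id d t0" if q: "\<bar>real_of_rat q\<bar> * B0 \<le> t0" for q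
  proof -
    have "\<sigma> \<in> {g. g (q, 0) \<le> omega_id d t0}"
    proof (rule closure_trans[of "{g. g (1, 0) < \<sigma> (1, 0) + 1}" _ "tbar d \<Delta> ` \<Delta>"])
      show "tbar d \<Delta> ` \<Delta> \<inter> {g. g (1, 0) < \<sigma> (1, 0) + 1} \<subseteq> {g. g (q, 0) \<le> omega_id d t0}"
      proof clarsimp
        fix x assume x: "x \<in> \<Delta>" "tbar d \<Delta> x (1, 0) < \<sigma> (1, 0) + 1"
        hence "d x 0 < \<sigma> (1, 0) + 1" using zD by (simp add: tbar_in)
        hence "norm x \<le> B0" using B[of x 0] unfolding B0_def by force
        hence "\<bar>real_of_rat q\<bar> * norm x \<le> \<bar>real_of_rat q\<bar> * B0" by (simp add: mult_left_mono)
        hence "norm (real_of_rat q *\<^sub>R x - 0) \<le> t0" using q by simp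
        hence "d (real_of_rat q *\<^sub>R x) 0 \<le> omega_id d t0" by (rule omega_ub)
        thus "tbar d \<Delta> x (q, 0) \<le> omega_id d t0" using zD by (simp add: tbar_in)
      qed
    qed (use \<sigma> closed_coord_le open_coord_less in \<open>auto simp: types_def\<close>)
    thus ?thesis by simp
  qed
  moreover have "B0 \<ge> 0" unfolding B0_def by simp
  ultimately show ?thesis by blast
qed


lemma types_normalize:
  assumes \<sigma>: "\<sigma> \<in> types d \<Delta>" and g: "gamma d < \<sigma> (1, 0)" and a: "gamma d < a"
  shows "\<exists>q. a \<le> \<sigma> (q, 0) \<and> \<sigma> (q, 0) \<le> 2 * a"
proof -
  obtain t0 where t0: "t0 > 0" "omega_id d t0 < a" using gamma_lessD[OF a] by blast
  obtain B0 where B0: "B0 \<ge> 0" "\<And>q. \<bar>real_of_rat q\<bar> * B0 \<le> t0 \<Longrightarrow> \<sigma> (q, 0) \<le> omega_id d t0"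
    using types_lower[OF \<sigma>, of t0] by blast
  obtain t B where tB: "t > 0" "\<And>q. 0 < q \<Longrightarrow> B < real_of_rat q * t \<Longrightarrow> a \<le> \<sigma> (q, 0)"
    using types_upper[OF \<sigma> g, of a] by blast
  obtain j :: nat where j: "B0 / t0 < real j" using reals_Archimedean2 by blast
  have j2: "B0 \<le> 2 ^ j * t0"
  proof -
    have "B0 / t0 < 2 ^ j" using j of_nat_less_two_power[of j, where ?'a=real] by linarith
    thus ?thesis using t0(1) by (simp add: divide_simps)
  qed
  define f where "f n = \<sigma> ((2::rat) ^ n / 2 ^ j, 0)" for n
  have f0: "f 0 < a"
  proof -
    have "\<bar>real_of_rat (1 / 2 ^ j)\<bar> * B0 \<le> t0" using j2
      by (simp add: of_rat_divide of_rat_power divide_simps mult.commute)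
    thus ?thesis using B0(2) t0(2) unfolding f_def by fastforce
  qed
  obtain N :: nat where N: "2 ^ j * B / t < real N" using reals_Archimedean2 by blast
  have fN: "a \<le> f N"
  proof -
    have "2 ^ j * B / t < 2 ^ N" using N of_nat_less_two_power[of N, where ?'a=real] by linarith
    hence "B < 2 ^ N / 2 ^ j * t" using tB(1) by (simp add: divide_simps mult.commute)
    hence "B < real_of_rat (2 ^ N / 2 ^ j) * t" by (simp add: of_rat_divide of_rat_power)
    thus ?thesis unfolding f_def by (intro tB(2)) auto
  qed
  define n where "n = (LEAST n. a \<le> f n)"
  have fn: "a \<le> f n" unfolding n_def by (rule LeastI[of _ N]) (rule fN)
  have n0: "n \<noteq> 0" using fn f0 by (metis not_less)
  have fn1: "f (n - 1) < a" using not_less_Least[of "n - 1" "\<lambda>n. a \<le> f n"] n0 unfolding n_def[symmetric] by force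
  have "f n \<le> 2 * f (n - 1)"
  proof -
    have "(2::rat) ^ n / 2 ^ j = 2 * (2 ^ (n - 1) / 2 ^ j)" using n0
      by (cases n) auto
    thus ?thesis unfolding f_def using types_double[OF \<sigma>] by metis
  qed
  hence "f n \<le> 2 * a" using fn1 by linarith
  thus ?thesis using fn unfolding f_def by blast
qed

lemma types_box:
  "\<exists>M. \<forall>\<sigma>\<in>types d \<Delta>. \<sigma> (1, 0) \<le> c \<longrightarrow> (\<forall>p. 0 \<le> \<sigma> p \<and> \<sigma> p \<le> M p)"
proof -
  obtain B0 where B0: "\<And>u v. d u v \<le> c + 1 \<Longrightarrow> norm (u - v) \<le> B0" using ce2 by blast
  have "\<forall>l. \<exists>B. \<forall>u v. norm (u - v) \<le> \<bar>real_of_rat l\<bar> * B0 \<longrightarrow> d u v \<le> B" using ce1 by blast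
  then obtain Bf where Bf: "\<And>l u v. norm (u - v) \<le> \<bar>real_of_rat l\<bar> * B0 \<Longrightarrow> d u v \<le> Bf l" by metis
  define M where "M = (\<lambda>(l, y). \<bar>Bf l\<bar> + d 0 y)"
  have "\<forall>p. 0 \<le> \<sigma> p \<and> \<sigma> p \<le> M p" if \<sigma>: "\<sigma> \<in> types d \<Delta>" "\<sigma> (1, 0) \<le> c" for \<sigma>
  proof -
    have "\<sigma> \<in> {g. \<forall>p. 0 \<le> g p \<and> g p \<le> M p}"
    proof (rule closure_trans[of "{g. g (1, 0) < c + 1}" _ "tbar d \<Delta> ` \<Delta>"])
      show "closed {g::rat \<times> 'a \<Rightarrow> real. \<forall>p. 0 \<le> g p \<and> g p \<le> M p}"
        by (intro closed_Collect_all closed_Collect_conj closed_coord_le closed_coord_ge)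
      show "tbar d \<Delta> ` \<Delta> \<inter> {g. g (1, 0) < c + 1} \<subseteq> {g. \<forall>p. 0 \<le> g p \<and> g p \<le> M p}"
      proof clarsimp
        fix x l y assume x: "x \<in> \<Delta>" "tbar d \<Delta> x (1, 0) < c + 1"
        hence "d x 0 < c + 1" using zD by (simp add: tbar_in)
        hence "norm x \<le> B0" using B0[of x 0] by force
        hence "\<bar>real_of_rat l\<bar> * norm x \<le> \<bar>real_of_rat l\<bar> * B0" by (simp add: mult_left_mono)
        hence "norm (real_of_rat l *\<^sub>R x - 0) \<le> \<bar>real_of_rat l\<bar> * B0" by simp
        hence b1: "d (real_of_rat l *\<^sub>R x) 0 \<le> Bf l" by (rule Bf)
        have b2: "d (real_of_rat l *\<^sub>R x) y \<le> d (real_of_rat l *\<^sub>R x) 0 + d 0 y" by (rule dtri)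
        show "0 \<le> tbar d \<Delta> x (l, y) \<and> tbar d \<Delta> x (l, y) \<le> M (l, y)"
        proof (cases "y \<in> \<Delta>")
          case True thus ?thesis using b1 b2 dnn by (simp add: tbar_in M_def)
        next
          case False thus ?thesis using dnn[of 0 y] by (simp add: tbar_out M_def)
        qed
      qed
    qed (use \<sigma> open_coord_less in \<open>auto simp: types_def\<close>)
    thus ?thesis by simp
  qed
  thus ?thesis by blast
qed

lemma chain_inter:
  assumes ne: "Ch \<noteq> {}" and all: "\<And>D. D \<in> Ch \<Longrightarrow> closed_adm_conic d \<Delta> D"
    and ch: "\<And>X Y. X \<in> Ch \<Longrightarrow> Y \<in> Ch \<Longrightarrow> X \<subseteq> Y \<or> Y \<subseteq> X"
  shows "closed_adm_conic d \<Delta> (\<Inter>Ch)"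
proof -
  define a where "a = gamma d + 1"
  have ga: "gamma d < a" unfolding a_def by simp
  define K where "K = types d \<Delta> \<inter> {g. a \<le> g (1, 0) \<and> g (1, 0) \<le> 2 * a}"
  have DK: "D \<inter> K \<noteq> {}" if D: "D \<in> Ch" for D
  proof -
    have cD: "closed_adm_conic d \<Delta> D" using all D by blast
    have cc: "conic_class d \<Delta> D" and ac: "admissible_class d D"
      using cD unfolding closed_adm_conic_def by blast+
    obtain \<sigma> where \<sigma>: "\<sigma> \<in> D" "gamma d < \<sigma> (1, 0)"
      using ac unfolding admissible_class_def admissible_type_def by blast
    have sub: "D \<subseteq> types d \<Delta>" using cc unfolding conic_class_def sym_types_def by blast
    hence \<sigma>T: "\<sigma> \<in> types d \<Delta>" using \<sigma> by blast
    obtain q where q: "a \<le> \<sigma> (q, 0)" "\<sigma> (q, 0) \<le> 2 * a" using types_normalize[OF \<sigma>T \<sigma>(2) ga] by blast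
    have "dil d \<Delta> q \<sigma> \<in> D" using cc \<sigma>(1) unfolding conic_class_def by blast
    moreover have "dil d \<Delta> q \<sigma> (1, 0) = \<sigma> (q, 0)" by (simp add: dil_eq[OF \<sigma>T])
    moreover have "dil d \<Delta> q \<sigma> \<in> types d \<Delta>" using sub calculation(1) by blast
    ultimately have "dil d \<Delta> q \<sigma> \<in> D \<inter> K" using q unfolding K_def by simp
    thus ?thesis by blast
  qed
  have cK: "compact K"
  proof -
    obtain M where M: "\<And>\<sigma>. \<sigma> \<in> types d \<Delta> \<Longrightarrow> \<sigma> (1, 0) \<le> 2 * a \<Longrightarrow> (\<forall>p. 0 \<le> \<sigma> p \<and> \<sigma> p \<le> M p)"
      using types_box[of "2 * a"] by blast
    define Bx where "Bx = PiE UNIV (\<lambda>p. {0..M p})"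
    have "compactin (product_topology (\<lambda>_. euclidean) UNIV) Bx"
      unfolding Bx_def compactin_PiE by simp
    hence cB: "compact Bx" by (simp add: euclidean_product_topology)
    have clK: "closed K" unfolding K_def
      by (intro closed_Int types_closed closed_Collect_conj closed_coord_le closed_coord_ge)
    have "K \<subseteq> Bx"
    proof
      fix g assume "g \<in> K"
      hence "g \<in> types d \<Delta>" "g (1, 0) \<le> 2 * a" unfolding K_def by auto
      hence "\<forall>p. 0 \<le> g p \<and> g p \<le> M p" by (rule M)
      thus "g \<in> Bx" unfolding Bx_def by (simp add: PiE_iff)
    qed
    hence "K = Bx \<inter> K" by blast
    thus ?thesis using compact_Int_closed[OF cB clK] by simp
  qed
  have clD: "closed D" if "D \<in> Ch" for D
  proof -
    have "closedin (top_of_set (types d \<Delta>)) D" using all[OF that] unfolding closed_adm_conic_def by blast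
    thus ?thesis using types_closed closedin_closed_trans by blast
  qed
  have minex: "\<exists>X\<in>F. \<forall>Y\<in>F. X \<subseteq> Y" if "finite F" "F \<noteq> {}" "F \<subseteq> Ch" for F
    using that
  proof (induction F rule: finite_ne_induct)
    case (singleton x) thus ?case by blast
  next
    case (insert x F)
    have FC: "F \<subseteq> Ch" and xC: "x \<in> Ch" using insert.prems by auto
    obtain m where m: "m \<in> F" "\<forall>Y\<in>F. m \<subseteq> Y" using insert.IH[OF FC] by blast
    have mC: "m \<in> Ch" using m(1) FC by blast
    have "x \<subseteq> m \<or> m \<subseteq> x" using ch[OF xC mC] .
    thus ?case
    proof
      assume "x \<subseteq> m" thus ?case using m by blast
    next
      assume "m \<subseteq> x" thus ?case using m by blast
    qed
  qed
  have "K \<inter> \<Inter>Ch \<noteq> {}"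
  proof (rule compact_imp_fip[OF cK])
    show "\<And>T. T \<in> Ch \<Longrightarrow> closed T" by (rule clD)
    fix F' assume F': "finite F'" "F' \<subseteq> Ch"
    show "K \<inter> \<Inter>F' \<noteq> {}"
    proof (cases "F' = {}")
      case True
      obtain D where D: "D \<in> Ch" using ne by blast
      have "D \<inter> K \<noteq> {}" by (rule DK[OF D])
      thus ?thesis using True by auto
    next
      case False
      then obtain X where X: "X \<in> F'" "\<forall>Y\<in>F'. X \<subseteq> Y" using minex[OF F'(1) False F'(2)] by blast
      have "X \<inter> K \<noteq> {}" using DK X(1) F'(2) by blast
      moreover have "X \<subseteq> \<Inter>F'" using X(2) by blast
      ultimately show ?thesis by blast
    qed
  qed
  then obtain \<sigma> where \<sigma>: "\<sigma> \<in> K" "\<sigma> \<in> \<Inter>Ch" by blast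
  have adm: "gamma d < \<sigma> (1, 0)" using \<sigma>(1) ga unfolding K_def by simp
  have t0: "tbar d \<Delta> 0 (1, 0) = 0" using zD by (simp add: tbar_in)
  have "\<sigma> (1, 0) \<noteq> tbar d \<Delta> 0 (1, 0)" using adm gamma_nn t0 by linarith
  hence "\<sigma> \<noteq> tbar d \<Delta> 0" by metis
  hence n0: "\<Inter>Ch \<noteq> {tbar d \<Delta> 0}" using \<sigma>(2) by blast
  have ccs: "\<And>D. D \<in> Ch \<Longrightarrow> conic_class d \<Delta> D" using all unfolding closed_adm_conic_def by blast
  obtain D0 where D0: "D0 \<in> Ch" using ne by blast
  have symt: "\<Inter>Ch \<subseteq> sym_types d \<Delta>"
    using ccs[OF D0] D0 unfolding conic_class_def by blast
  have "conic_class d \<Delta> (\<Inter>Ch)"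
    unfolding conic_class_def
  proof (intro conjI)
    show "\<Inter>Ch \<noteq> {}" using \<sigma>(2) by blast
    show "\<Inter>Ch \<subseteq> sym_types d \<Delta>" by (rule symt)
    show "\<Inter>Ch \<noteq> {tbar d \<Delta> 0}" by (rule n0)
    show "\<forall>q. \<forall>\<sigma>\<in>\<Inter>Ch. dil d \<Delta> q \<sigma> \<in> \<Inter>Ch"
    proof (intro allI ballI InterI)
      fix q \<sigma> D assume "\<sigma> \<in> \<Inter>Ch" "D \<in> Ch"
      thus "dil d \<Delta> q \<sigma> \<in> D" using ccs[of D] unfolding conic_class_def by blast
    qed
    show "\<forall>\<sigma>\<in>\<Inter>Ch. \<forall>\<tau>\<in>\<Inter>Ch. conv d \<Delta> \<sigma> \<tau> \<in> \<Inter>Ch"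
    proof (intro allI ballI InterI)
      fix \<tau> \<sigma> D assume "\<sigma> \<in> \<Inter>Ch" "\<tau> \<in> \<Inter>Ch" "D \<in> Ch"
      thus "conv d \<Delta> \<sigma> \<tau> \<in> D" using ccs[of D] unfolding conic_class_def by blast
    qed
  qed
  moreover have "admissible_class d (\<Inter>Ch)"
    unfolding admissible_class_def admissible_type_def using \<sigma>(2) adm by blast
  moreover have "closedin (top_of_set (types d \<Delta>)) (\<Inter>Ch)"
  proof (rule closedin_Inter[OF ne])
    fix S assume "S \<in> Ch"
    thus "closedin (top_of_set (types d \<Delta>)) S" using all unfolding closed_adm_conic_def by blast
  qed
  ultimately show ?thesis unfolding closed_adm_conic_def by blast
qed


lemma minimal_exists:
  assumes C: "closed_adm_conic d \<Delta> C"
  shows "\<exists>D \<subseteq> C. closed_adm_conic d \<Delta> D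
           \<and> (\<forall>E. closed_adm_conic d \<Delta> E \<and> E \<subseteq> D \<longrightarrow> E = D)"
proof -
  define A where "A = {- D | D. D \<subseteq> C \<and> closed_adm_conic d \<Delta> D}"
  have "\<forall>Cc\<in>chains A. \<exists>U\<in>A. \<forall>X\<in>Cc. X \<subseteq> U"
  proof
    fix Cc assume Cc: "Cc \<in> chains A"
    show "\<exists>U\<in>A. \<forall>X\<in>Cc. X \<subseteq> U"
    proof (cases "Cc = {}")
      case True
      have "- C \<in> A" using C unfolding A_def by blast
      thus ?thesis using True by blast
    next
      case False
      define Ch where "Ch = uminus ` Cc"
      have sub: "Cc \<subseteq> A" using Cc by (simp add: chains_def)
      have chc: "\<And>X Y. X \<in> Cc \<Longrightarrow> Y \<in> Cc \<Longrightarrow> X \<subseteq> Y \<or> Y \<subseteq> X"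
        using Cc by (auto simp: chains_def chain_subset_def)
      have allD: "\<And>D. D \<in> Ch \<Longrightarrow> closed_adm_conic d \<Delta> D \<and> D \<subseteq> C"
      proof -
        fix D assume "D \<in> Ch"
        then obtain X where X: "X \<in> Cc" "D = - X" unfolding Ch_def by blast
        then obtain D' where "X = - D'" "D' \<subseteq> C" "closed_adm_conic d \<Delta> D'" using sub unfolding A_def by blast
        thus "closed_adm_conic d \<Delta> D \<and> D \<subseteq> C" using X by simp
      qed
      have "closed_adm_conic d \<Delta> (\<Inter>Ch)"
      proof (rule chain_inter)
        show "Ch \<noteq> {}" using False unfolding Ch_def by blast
        show "\<And>D. D \<in> Ch \<Longrightarrow> closed_adm_conic d \<Delta> D" using allD by blast
        fix X Y assume "X \<in> Ch" "Y \<in> Ch"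
        then obtain X' Y' where "X' \<in> Cc" "Y' \<in> Cc" "X = - X'" "Y = - Y'" unfolding Ch_def by blast
        thus "X \<subseteq> Y \<or> Y \<subseteq> X" using chc by blast
      qed
      moreover have "\<Inter>Ch \<subseteq> C" using allD False unfolding Ch_def by blast
      ultimately have "- \<Inter>Ch \<in> A" unfolding A_def by blast
      moreover have "\<forall>X\<in>Cc. X \<subseteq> - \<Inter>Ch" unfolding Ch_def by blast
      ultimately show ?thesis by blast
    qed
  qed
  from Zorn_Lemma2[OF this] obtain M where M: "M \<in> A" "\<forall>X\<in>A. M \<subseteq> X \<longrightarrow> X = M" by blast
  then obtain D where D: "M = - D" "D \<subseteq> C" "closed_adm_conic d \<Delta> D" unfolding A_def by blast
  have "E = D" if E: "closed_adm_conic d \<Delta> E" "E \<subseteq> D" for E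
  proof -
    have "- E \<in> A" using E D(2) unfolding A_def by blast
    moreover have "M \<subseteq> - E" using D(1) E(2) by blast
    ultimately have "- E = M" using M(2) by blast
    thus ?thesis using D(1) by simp
  qed
  thus ?thesis using D by blast
qed

end

theorem proposition5p3:
  fixes d :: "'a::banach \<Rightarrow> 'a \<Rightarrow> real" and \<Delta> :: "'a set"
    and C :: "(rat \<times> 'a \<Rightarrow> real) set"
  assumes "separable_nv TYPE('a)" and "infinite_dimensional TYPE('a)"
    and "pseudometric d" and "translation_invariant d" and "stable_pm d"
    and "coarse_equiv_id d"
    and "rat_dense_subspace \<Delta>"
    and "closed_adm_conic d \<Delta> C"
  shows "\<exists>D \<subseteq> C. closed_adm_conic d \<Delta> D
           \<and> (\<forall>E. closed_adm_conic d \<Delta> E \<and> E \<subseteq> D \<longrightarrow> E = D)"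
proof -
  interpret Sett d \<Delta> using assms by (simp add: Sett_def)
  show ?thesis using minimal_exists[OF assms(8)] .
qed

end
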